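(* Let $L>0$, $N\ge 5$ an integer, $h=L/N$, $x_i=y_i=-\tfrac L2+ih$ for $i=0,\dots,N-1$, $\tau>0$, $p,q\in\mathbb{R}$. Let $\Gamma$ be an $L$-periodic function (extended periodically, i.e. $\Gamma(\xi)$ is evaluated as $\Gamma(((\xi+\tfrac L2)\bmod L)-\tfrac L2)$) with $\Gamma(-\xi)=\overline{\Gamma(\xi)}$, and write $\Gamma_{i,j}=\Gamma(x_i-y_j)$. Let $C$ be the $N\times N$ real symmetric circulant matrix of the fourth-order central difference second derivative with periodic boundary conditions, $(Cf)_i=\frac{-f_{i+2}+16f_{i+1}-30f_i+16f_{i-1}-f_{i-2}}{12h^2}$ (indices mod $N$), and for an $N\times N$ array $U$ define $(\mathfrak{D}_H U)_{i,j}=\sum_k C_{ik}U_{k,j}-\sum_k C_{jk}U_{i,k}$. Given an $N\times N$ Hermitian array $U^0$ ($U^0_{i,j}=\overline{U^0_{j,i}}$) and a real antisymmetric array $\Phi^{-1/2}$, define for $n\ge 0$ \[ \Phi^{n+\frac12}_{i,j}=2\bigl(U^n_{i,i}-U^n_{j,j}\bigr)-\Phi^{n-\frac12}_{i,j}, \] $U^{n+\frac12}$ as the solution of \[ U^{n+\frac12}_{i,j}-\tfrac{ip\tau}{2}(\mathfrak{D}_H U^{n+\frac12})_{i,j}-\tfrac{iq\tau}{2}\Phi^{n+\frac12}_{i,j}U^{n+\frac12}_{i,j}=U^n_{i,j}+\tfrac{iq\tau}{2}\Gamma_{i,j}\Phi^{n+\frac12}_{i,j}, \] and $U^{n+1}_{i,j}=2U^{n+\frac12}_{i,j}-U^n_{i,j}$.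 Let \[ I_0[U^n]=h^2\sum_{i=0}^{N-1}\sum_{j=0}^{N-1}\bigl|\Gamma_{i,j}+U^n_{i,j}\bigr|^2,\qquad I_1[U^n]=h\sum_{i=0}^{N-1}U^n_{i,i}. \] Then $I_0[U^{n+1}]=I_0[U^n]$ and $I_1[U^{n+1}]=I_1[U^n]$ for all $n\ge 0$.
   Context: This is the fully discrete relaxation–Crank–Nicolson scheme (fourth-order finite differences in space with periodic boundary conditions) for the equation $i\partial_t u+p(\Delta_x-\Delta_y)u+q(u(x,x,t)-u(y,y,t))(\Gamma(x-y)+u)=0$ on $[-\tfrac L2,\tfrac L2]^2$; $U^n_{i,j}$ approximates $u(x_i,y_j,n\tau)$ and $\Phi^{n+1/2}_{i,j}$ approximates $u(x_i,x_i,t)-u(y_j,y_j,t)$ at $t=(n+\tfrac12)\tau$. *)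

theory Defs
  imports Complex_Main
begin

definition grid :: "real \<Rightarrow> real \<Rightarrow> nat \<Rightarrow> real" where
  "grid L h i = - L / 2 + real i * h"

definition rmod :: "real \<Rightarrow> real \<Rightarrow> real" where
  "rmod a b = a - b * of_int \<lfloor>a / b\<rfloor>"

definition per_eval :: "real \<Rightarrow> (real \<Rightarrow> complex) \<Rightarrow> real \<Rightarrow> complex" where
  "per_eval L G \<xi> = G (rmod (\<xi> + L / 2) L - L / 2)"

definition Gam :: "real \<Rightarrow> real \<Rightarrow> (real \<Rightarrow> complex) \<Rightarrow> nat \<Rightarrow> nat \<Rightarrow> complex" where
  "Gam L h G i j = per_eval L G (grid L h i - grid L h j)"

definition Cmat :: "nat \<Rightarrow> real \<Rightarrow> nat \<Rightarrow> nat \<Rightarrow> real" where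
  "Cmat N h i k =
     ( - (if k = (i + 2) mod N then 1 else 0)
       + 16 * (if k = (i + 1) mod N then 1 else 0)
       - 30 * (if k = i mod N then 1 else 0)
       + 16 * (if k = (i + N - 1) mod N then 1 else 0)
       - (if k = (i + N - 2) mod N then 1 else 0)) / (12 * h\<^sup>2)"

definition DH :: "nat \<Rightarrow> real \<Rightarrow> (nat \<Rightarrow> nat \<Rightarrow> complex) \<Rightarrow> nat \<Rightarrow> nat \<Rightarrow> complex" where
  "DH N h U i j = (\<Sum>k<N. complex_of_real (Cmat N h i k) * U k j)
                - (\<Sum>k<N. complex_of_real (Cmat N h j k) * U i k)"

definition I0 :: "nat \<Rightarrow> real \<Rightarrow> real \<Rightarrow> (real \<Rightarrow> complex) \<Rightarrow> (nat \<Rightarrow> nat \<Rightarrow> complex) \<Rightarrow> real" where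
  "I0 N L h G U = h\<^sup>2 * (\<Sum>i<N. \<Sum>j<N. (cmod (Gam L h G i j + U i j))\<^sup>2)"

definition I1 :: "nat \<Rightarrow> real \<Rightarrow> (nat \<Rightarrow> nat \<Rightarrow> complex) \<Rightarrow> complex" where
  "I1 N h U = complex_of_real h * (\<Sum>i<N. U i i)"

end

theory Submission
  imports Defs
begin

definition Dg :: "nat \<Rightarrow> (nat \<Rightarrow> nat \<Rightarrow> complex) \<Rightarrow> (nat \<Rightarrow> nat \<Rightarrow> complex) \<Rightarrow> nat \<Rightarrow> nat \<Rightarrow> complex" where
  "Dg N c X i j = (\<Sum>k<N. c i k * X k j) - (\<Sum>k<N. c j k * X i k)"

lemma quad_sym:
  fixes c :: "nat \<Rightarrow> nat \<Rightarrow> 'a::comm_semiring_1"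
  assumes "\<forall>i<N. \<forall>k<N. c i k = c k i"
  shows "(\<Sum>i<N. \<Sum>k<N. c i k * x k * y i) = (\<Sum>i<N. \<Sum>k<N. x i * c i k * y k)"
proof -
  have "(\<Sum>i<N. \<Sum>k<N. c i k * x k * y i) = (\<Sum>k<N. \<Sum>i<N. c i k * x k * y i)"
    by (rule sum.swap)
  also have "\<dots> = (\<Sum>k<N. \<Sum>i<N. x k * c k i * y i)"
    using assms by (intro sum.cong refl) (simp add: ac_simps)
  finally show ?thesis .
qed

lemma Dg_adj:
  assumes sym: "\<forall>i<N. \<forall>k<N. c i k = c k i" and re: "\<And>i k. cnj (c i k) = c i k"
  shows "(\<Sum>i<N. \<Sum>j<N. Dg N c X i j * cnj (Y i j)) = (\<Sum>i<N. \<Sum>j<N. X i j * cnj (Dg N c Y i j))"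
proof -
  have A: "(\<Sum>i<N. \<Sum>j<N. (\<Sum>k<N. c i k * X k j) * cnj (Y i j))
         = (\<Sum>i<N. \<Sum>j<N. X i j * cnj (\<Sum>k<N. c i k * Y k j))"
  proof -
    have "(\<Sum>i<N. \<Sum>j<N. (\<Sum>k<N. c i k * X k j) * cnj (Y i j))
        = (\<Sum>j<N. \<Sum>i<N. \<Sum>k<N. c i k * X k j * cnj (Y i j))"
      by (subst sum.swap) (simp add: sum_distrib_right)
    also have "\<dots> = (\<Sum>j<N. \<Sum>i<N. \<Sum>k<N. X i j * c i k * cnj (Y k j))"
      by (intro sum.cong refl quad_sym[OF sym])
    also have "\<dots> = (\<Sum>i<N. \<Sum>j<N. X i j * cnj (\<Sum>k<N. c i k * Y k j))"
      by (subst sum.swap) (simp add: sum_distrib_left re mult.assoc)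
    finally show ?thesis .
  qed
  have B: "(\<Sum>i<N. \<Sum>j<N. (\<Sum>k<N. c j k * X i k) * cnj (Y i j))
         = (\<Sum>i<N. \<Sum>j<N. X i j * cnj (\<Sum>k<N. c j k * Y i k))"
  proof -
    have "(\<Sum>i<N. \<Sum>j<N. (\<Sum>k<N. c j k * X i k) * cnj (Y i j))
        = (\<Sum>i<N. \<Sum>j<N. \<Sum>k<N. c j k * X i k * cnj (Y i j))"
      by (simp add: sum_distrib_right)
    also have "\<dots> = (\<Sum>i<N. \<Sum>j<N. \<Sum>k<N. X i j * c j k * cnj (Y i k))"
      by (intro sum.cong refl quad_sym[OF sym])
    also have "\<dots> = (\<Sum>i<N. \<Sum>j<N. X i j * cnj (\<Sum>k<N. c j k * Y i k))"
      by (simp add: sum_distrib_left re mult.assoc)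
    finally show ?thesis .
  qed
  show ?thesis using A B
    by (simp add: Dg_def left_diff_distrib right_diff_distrib sum_subtractf)
qed

lemma Dg_trace:
  assumes sym: "\<forall>i<N. \<forall>k<N. c i k = c k i"
  shows "(\<Sum>i<N. Dg N c X i i) = 0"
proof -
  have "(\<Sum>i<N. \<Sum>k<N. c i k * X k i) = (\<Sum>k<N. \<Sum>i<N. c i k * X k i)" by (rule sum.swap)
  also have "\<dots> = (\<Sum>k<N. \<Sum>i<N. c k i * X k i)" using sym by (intro sum.cong refl) simp
  finally show ?thesis by (simp add: Dg_def sum_subtractf)
qed

lemma Dg_herm:
  assumes re: "\<And>i k. cnj (c i k) = c i k"
  shows "Dg N c (\<lambda>i j. cnj (W j i)) i j = - cnj (Dg N c W j i)"
  by (simp add: Dg_def re)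

lemma Dg_unique:
  assumes sym: "\<forall>i<N. \<forall>k<N. c i k = c k i" and re: "\<And>i k. cnj (c i k) = c i k"
    and P: "\<forall>i<N. \<forall>j<N. Im (P i j) = 0"
    and eq: "\<forall>i<N. \<forall>j<N. D i j - \<i> * complex_of_real a * Dg N c D i j - \<i> * complex_of_real b * P i j * D i j = 0"
  shows "\<forall>i<N. \<forall>j<N. D i j = 0"
proof -
  define Q where "Q = (\<Sum>i<N. \<Sum>j<N. Dg N c D i j * cnj (D i j))"
  have "Q = (\<Sum>i<N. \<Sum>j<N. D i j * cnj (Dg N c D i j))" unfolding Q_def by (rule Dg_adj[OF sym re])
  also have "\<dots> = cnj Q" unfolding Q_def by (simp add: mult.commute)
  finally have QQ: "Q = cnj Q" .
  have "Im Q = Im (cnj Q)" using QQ by simp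
  hence ImQ: "Im Q = 0" by simp
  have elem: "Re ((D i j - \<i> * complex_of_real a * Dg N c D i j - \<i> * complex_of_real b * P i j * D i j) * cnj (D i j))
     = (cmod (D i j))^2 - Re (\<i> * complex_of_real a * (Dg N c D i j * cnj (D i j)))" if "i<N" "j<N" for i j
    using P that by (simp add: cmod_power2 algebra_simps power2_eq_square[of "Im _"] power2_eq_square[of "Re _"])
  have "0 = (\<Sum>i<N. \<Sum>j<N. Re ((D i j - \<i> * complex_of_real a * Dg N c D i j - \<i> * complex_of_real b * P i j * D i j) * cnj (D i j)))"
    using eq by simp
  also have "\<dots> = (\<Sum>i<N. \<Sum>j<N. (cmod (D i j))^2 - Re (\<i> * complex_of_real a * (Dg N c D i j * cnj (D i j))))"
    by (intro sum.cong refl elem; simp)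
  also have "\<dots> = (\<Sum>i<N. \<Sum>j<N. (cmod (D i j))^2) - Re (\<i> * complex_of_real a * Q)"
    unfolding Q_def sum_subtractf Re_sum sum_distrib_left by simp
  also have "Re (\<i> * complex_of_real a * Q) = 0" using ImQ by simp
  finally have S: "(\<Sum>i<N. \<Sum>j<N. (cmod (D i j))^2) = 0" by simp
  have "\<forall>i<N. (\<Sum>j<N. (cmod (D i j))^2) = 0"
    using S by (subst (asm) sum_nonneg_eq_0_iff) (auto intro: sum_nonneg)
  hence "\<forall>i<N. \<forall>j<N. (cmod (D i j))^2 = 0"
    by (auto simp: sum_nonneg_eq_0_iff)
  thus ?thesis by simp
qed

lemma Dg_diff: "Dg N c (\<lambda>i j. X i j - Y i j) i j = Dg N c X i j - Dg N c Y i j"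
  by (simp add: Dg_def algebra_simps sum_subtractf)

lemma entry_energy:
  assumes "Im P = 0" and "U = W - \<i> * complex_of_real a * X - \<i> * complex_of_real b * P * (\<Gamma> + W)"
  shows "(cmod (\<Gamma> + (2 * W - U)))^2 = (cmod (\<Gamma> + U))^2 + 4 * Re (\<i> * complex_of_real a * (X * cnj (\<Gamma> + W)))"
proof -
  have "P = complex_of_real (Re P)" using assms(1) by (simp add: complex_eq_iff)
  then obtain r where r: "P = complex_of_real r" by blast
  show ?thesis unfolding assms(2) r cmod_power2
    by (simp add: power2_eq_square algebra_simps)
qed

lemma step:
  fixes c :: "nat \<Rightarrow> nat \<Rightarrow> complex"
  assumes sym: "\<forall>i<N. \<forall>k<N. c i k = c k i" and re: "\<And>i k. cnj (c i k) = c i k"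
    and UH: "\<forall>i<N. \<forall>j<N. U i j = cnj (U j i)"
    and P: "\<forall>i<N. \<forall>j<N. Im (P i j) = 0 \<and> P i j = - P j i"
    and GH: "\<forall>i<N. \<forall>j<N. \<Gamma> i j = cnj (\<Gamma> j i)"
    and GD: "\<forall>i<N. \<forall>j<N. Dg N c \<Gamma> i j = 0"
    and eq: "\<forall>i<N. \<forall>j<N. W i j - \<i> * complex_of_real a * Dg N c W i j - \<i> * complex_of_real b * P i j * W i j
                = U i j + \<i> * complex_of_real b * \<Gamma> i j * P i j"
  shows "\<forall>i<N. \<forall>j<N. W i j = cnj (W j i)"
    and "(\<Sum>i<N. \<Sum>j<N. (cmod (\<Gamma> i j + (2 * W i j - U i j)))^2) = (\<Sum>i<N. \<Sum>j<N. (cmod (\<Gamma> i j + U i j))^2)"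
    and "(\<Sum>i<N. 2 * W i i - U i i) = (\<Sum>i<N. U i i)"
proof -
  define W' where "W' = (\<lambda>i j. cnj (W j i))"
  have PIm: "\<forall>i<N. \<forall>j<N. Im (P i j) = 0" using P by blast
  have Pa: "P i j = - P j i" if "i<N" "j<N" for i j using P that by blast
  have Pc: "cnj (P i j) = P i j" if "i<N" "j<N" for i j using PIm that by (simp add: complex_eq_iff)
  have eq': "W' i j - \<i> * complex_of_real a * Dg N c W' i j - \<i> * complex_of_real b * P i j * W' i j
                = U i j + \<i> * complex_of_real b * \<Gamma> i j * P i j" if "i<N" "j<N" for i j
  proof -
    have "cnj (W j i - \<i> * complex_of_real a * Dg N c W j i - \<i> * complex_of_real b * P j i * W j i)
        = cnj (U j i + \<i> * complex_of_real b * \<Gamma> j i * P j i)" using eq that by simp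
    moreover have "Dg N c W' i j = - cnj (Dg N c W j i)" unfolding W'_def by (rule Dg_herm[OF re])
    moreover have "cnj (P j i) = - P i j" using Pc[of j i] Pa[of i j] that by simp
    moreover have "cnj (U j i) = U i j" using UH that by metis
    moreover have "cnj (\<Gamma> j i) = \<Gamma> i j" using GH that by metis
    moreover have "W' i j = cnj (W j i)" unfolding W'_def by simp
    ultimately show ?thesis by (simp add: algebra_simps)
  qed
  have "\<forall>i<N. \<forall>j<N. W i j - W' i j = 0"
  proof (rule Dg_unique[OF sym re, where P=P and a=a and b=b])
    show "\<forall>i<N. \<forall>j<N. Im (P i j) = 0" by (rule PIm)
    show "\<forall>i<N. \<forall>j<N. W i j - W' i j - \<i> * complex_of_real a * Dg N c (\<lambda>i j. W i j - W' i j) i j -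
         \<i> * complex_of_real b * P i j * (W i j - W' i j) = 0"
    proof (intro allI impI)
      fix i j assume ij: "i<N" "j<N"
      show "W i j - W' i j - \<i> * complex_of_real a * Dg N c (\<lambda>i j. W i j - W' i j) i j -
         \<i> * complex_of_real b * P i j * (W i j - W' i j) = 0"
      proof -
        have E: "W i j - \<i> * complex_of_real a * Dg N c W i j - \<i> * complex_of_real b * P i j * W i j
                = U i j + \<i> * complex_of_real b * \<Gamma> i j * P i j" using eq ij by blast
        have "W i j - W' i j - \<i> * complex_of_real a * Dg N c (\<lambda>i j. W i j - W' i j) i j -
         \<i> * complex_of_real b * P i j * (W i j - W' i j)
          = (W i j - \<i> * complex_of_real a * Dg N c W i j - \<i> * complex_of_real b * P i j * W i j)
           - (W' i j - \<i> * complex_of_real a * Dg N c W' i j - \<i> * complex_of_real b * P i j * W' i j)"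
          unfolding Dg_diff by (simp add: algebra_simps)
        also have "\<dots> = 0" unfolding E eq'[OF ij] by simp
        finally show ?thesis .
      qed
    qed
  qed
  thus "\<forall>i<N. \<forall>j<N. W i j = cnj (W j i)" unfolding W'_def right_minus_eq by blast
  have Ueq: "U i j = W i j - \<i> * complex_of_real a * Dg N c W i j - \<i> * complex_of_real b * P i j * (\<Gamma> i j + W i j)"
    if "i<N" "j<N" for i j
  proof -
    have E: "W i j - \<i> * complex_of_real a * Dg N c W i j - \<i> * complex_of_real b * P i j * W i j
                = U i j + \<i> * complex_of_real b * \<Gamma> i j * P i j" using eq that by blast
    have "U i j = (W i j - \<i> * complex_of_real a * Dg N c W i j - \<i> * complex_of_real b * P i j * W i j) - \<i> * complex_of_real b * \<Gamma> i j * P i j"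
      unfolding E by simp
    thus ?thesis by (simp add: algebra_simps)
  qed
  define Q where "Q = (\<Sum>i<N. \<Sum>j<N. Dg N c W i j * cnj (W i j))"
  have "Q = (\<Sum>i<N. \<Sum>j<N. W i j * cnj (Dg N c W i j))" unfolding Q_def by (rule Dg_adj[OF sym re])
  also have "\<dots> = cnj Q" unfolding Q_def by (simp add: mult.commute)
  finally have QQ: "Q = cnj Q" .
  have "Im Q = Im (cnj Q)" using QQ by simp
  hence ImQ: "Im Q = 0" by simp
  have G0: "(\<Sum>i<N. \<Sum>j<N. Dg N c W i j * cnj (\<Gamma> i j)) = 0"
    using GD by (simp add: Dg_adj[OF sym re])
  have "(\<Sum>i<N. \<Sum>j<N. (cmod (\<Gamma> i j + (2 * W i j - U i j)))^2)
      = (\<Sum>i<N. \<Sum>j<N. (cmod (\<Gamma> i j + U i j))^2 + 4 * Re (\<i> * complex_of_real a * (Dg N c W i j * cnj (\<Gamma> i j + W i j))))"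
  proof (intro sum.cong refl)
    fix i j assume ij: "i \<in> {..<N}" "j \<in> {..<N}"
    show "(cmod (\<Gamma> i j + (2 * W i j - U i j)))^2 = (cmod (\<Gamma> i j + U i j))^2 + 4 * Re (\<i> * complex_of_real a * (Dg N c W i j * cnj (\<Gamma> i j + W i j)))"
      by (rule entry_energy[OF _ Ueq]) (use PIm ij in auto)
  qed
  also have "\<dots> = (\<Sum>i<N. \<Sum>j<N. (cmod (\<Gamma> i j + U i j))^2) + 4 * Re (\<i> * complex_of_real a *
       ((\<Sum>i<N. \<Sum>j<N. Dg N c W i j * cnj (\<Gamma> i j)) + Q))"
    unfolding Q_def by (simp only: complex_cnj_add distrib_left plus_complex.sel sum.distrib sum_distrib_left Re_sum add.assoc)
  also have "\<dots> = (\<Sum>i<N. \<Sum>j<N. (cmod (\<Gamma> i j + U i j))^2)" using G0 ImQ by simp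
  finally show "(\<Sum>i<N. \<Sum>j<N. (cmod (\<Gamma> i j + (2 * W i j - U i j)))^2) = (\<Sum>i<N. \<Sum>j<N. (cmod (\<Gamma> i j + U i j))^2)" .
  have Pd: "P i i = 0" if "i<N" for i
  proof -
    have "P i i = - P i i" using P that by blast
    thus ?thesis by (simp add: eq_neg_iff_add_eq_0)
  qed
  have "(\<Sum>i<N. 2 * W i i - U i i) = (\<Sum>i<N. U i i + 2 * (\<i> * complex_of_real a * Dg N c W i i))"
    by (intro sum.cong refl) (simp add: Ueq Pd algebra_simps)
  also have "\<dots> = (\<Sum>i<N. U i i) + 2 * \<i> * complex_of_real a * (\<Sum>i<N. Dg N c W i i)"
    by (simp add: sum.distrib sum_distrib_left algebra_simps)
  also have "\<dots> = (\<Sum>i<N. U i i)" using Dg_trace[OF sym] by simp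
  finally show "(\<Sum>i<N. 2 * W i i - U i i) = (\<Sum>i<N. U i i)" .
qed


lemma mod_lt2: "(a::nat) < 2*N \<Longrightarrow> a mod N = (if a < N then a else a - N)"
  by (simp add: le_mod_geq)

lemma Cmat_sym:
  assumes "i < N" "k < N" "N \<ge> 5"
  shows "Cmat N h i k = Cmat N h k i"
proof -
  have e1: "(k = (i+2) mod N) = (i = (k+N-2) mod N)"
    using assms by (simp add: mod_lt2) arith
  have e2: "(k = (i+1) mod N) = (i = (k+N-1) mod N)"
    using assms by (simp add: mod_lt2) arith
  have e3: "(k = i mod N) = (i = k mod N)"
    using assms by auto
  have e4: "(k = (i+N-1) mod N) = (i = (k+1) mod N)"
    using assms by (simp add: mod_lt2) arith
  have e5: "(k = (i+N-2) mod N) = (i = (k+2) mod N)"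
    using assms by (simp add: mod_lt2) arith
  show ?thesis unfolding Cmat_def e1 e2 e3 e4 e5 by (simp add: algebra_simps)
qed

lemma C_apply:
  assumes "N > 0"
  shows "(\<Sum>k<N. complex_of_real (Cmat N h i k) * f k) = complex_of_real (1 / (12 * h^2)) *
     (- f ((i+2) mod N) + 16 * f ((i+1) mod N) - 30 * f (i mod N) + 16 * f ((i+N-1) mod N) - f ((i+N-2) mod N))"
proof -
  define E where "E = (\<lambda>k. - (if k = (i+2) mod N then f k else 0) + (if k = (i+1) mod N then 16 * f k else 0)
      - (if k = i mod N then 30 * f k else 0) + (if k = (i+N-1) mod N then 16 * f k else 0)
      - (if k = (i+N-2) mod N then f k else 0))"
  have pt: "\<And>k. complex_of_real (Cmat N h i k) * f k = complex_of_real (1 / (12 * h^2)) * E k"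
    by (simp add: Cmat_def E_def algebra_simps)
  have "(\<Sum>k<N. complex_of_real (Cmat N h i k) * f k) = (\<Sum>k<N. complex_of_real (1 / (12 * h^2)) * E k)"
    by (rule sum.cong[OF refl]) (rule pt)
  also have "\<dots> = complex_of_real (1 / (12 * h^2)) * (\<Sum>k<N. E k)"
    by (rule sum_distrib_left[symmetric])
  also have "(\<Sum>k<N. E k) =
     (- (\<Sum>k<N. if k = (i+2) mod N then f k else 0) + (\<Sum>k<N. if k = (i+1) mod N then 16 * f k else 0)
      - (\<Sum>k<N. if k = i mod N then 30 * f k else 0) + (\<Sum>k<N. if k = (i+N-1) mod N then 16 * f k else 0)
      - (\<Sum>k<N. if k = (i+N-2) mod N then f k else 0))"
    unfolding E_def by (simp only: sum.distrib sum_subtractf sum_negf)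
  also have "\<dots> =
     (- f ((i+2) mod N) + 16 * f ((i+1) mod N) - 30 * f (i mod N) + 16 * f ((i+N-1) mod N) - f ((i+N-2) mod N))"
    using assms by (simp only: sum.delta finite_lessThan lessThan_iff mod_less_divisor if_True)
  finally show ?thesis .
qed

lemma G_shift_nat:
  fixes G :: "real \<Rightarrow> 'b" and L :: real
  assumes "\<forall>\<xi>. G (\<xi> + L) = G \<xi>"
  shows "G (\<xi> + real n * L) = G \<xi>"
proof (induction n arbitrary: \<xi>)
  case 0 then show ?case by simp
next
  case (Suc n)
  have "G (\<xi> + real (Suc n) * L) = G ((\<xi> + real n * L) + L)" by (simp add: algebra_simps)
  also have "\<dots> = G (\<xi> + real n * L)" using assms by blast
  finally show ?case using Suc by simp
qed

lemma G_shift: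
  fixes G :: "real \<Rightarrow> 'b" and L :: real
  assumes "\<forall>\<xi>. G (\<xi> + L) = G \<xi>"
  shows "G (\<xi> + of_int k * L) = G \<xi>"
proof (cases "k \<ge> 0")
  case True
  define n where "n = nat k"
  hence "k = int n" using True by simp
  thus ?thesis using G_shift_nat[OF assms] by simp
next
  case False
  define n where "n = nat (- k)"
  hence n: "k = - int n" using False by simp
  have "G \<xi> = G ((\<xi> + of_int k * L) + real n * L)" by (simp add: n algebra_simps)
  also have "\<dots> = G (\<xi> + of_int k * L)" by (rule G_shift_nat[OF assms])
  finally show ?thesis by simp
qed

lemma Gam_eq:
  assumes "\<forall>\<xi>. G (\<xi> + L) = G \<xi>" "L > 0"
  shows "Gam L h G a b = G (of_int (int a - int b) * h)"
proof -
  define \<xi> where "\<xi> = of_int (int a - int b) * h"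
  have "grid L h a - grid L h b = \<xi>" by (simp add: grid_def \<xi>_def algebra_simps)
  moreover have "rmod (\<xi> + L / 2) L - L / 2 = \<xi> + of_int (- \<lfloor>(\<xi> + L / 2) / L\<rfloor>) * L"
    by (simp add: rmod_def algebra_simps)
  ultimately have "Gam L h G a b = G (\<xi> + of_int (- \<lfloor>(\<xi> + L / 2) / L\<rfloor>) * L)"
    unfolding Gam_def per_eval_def by simp
  also have "\<dots> = G \<xi>" by (rule G_shift[OF assms(1)])
  finally show ?thesis unfolding \<xi>_def .
qed

lemma Gam_cong:
  assumes "\<forall>\<xi>. G (\<xi> + L) = G \<xi>" "L > 0" "h = L / real N" "N > 0"
    and "(int a - int b) mod int N = (int c - int d) mod int N"
  shows "Gam L h G a b = Gam L h G c d"
proof -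
  define x where "x = int a - int b"
  define y where "y = int c - int d"
  define m where "m = x div int N - y div int N"
  have hx: "x = x div int N * int N + x mod int N" by simp
  have hy: "y = y div int N * int N + y mod int N" by simp
  have hr: "x mod int N = y mod int N" using assms(5) by (simp add: x_def y_def)
  have xi: "x = y + int N * m" unfolding m_def using hx hy hr by algebra
  have "real_of_int x = real_of_int y + real N * real_of_int m"
    using xi by (metis of_int_add of_int_mult of_int_of_nat_eq)
  hence "real_of_int x * h = real_of_int y * h + real_of_int m * (real N * h)"
    by (simp add: algebra_simps)
  also have "real N * h = L" using assms by simp
  finally have e: "real_of_int x * h = real_of_int y * h + real_of_int m * L" .
  have "Gam L h G a b = G (real_of_int x * h)" unfolding x_def by (rule Gam_eq[OF assms(1,2)])
  also have "\<dots> = G (real_of_int y * h)" unfolding e by (rule G_shift[OF assms(1)])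
  also have "\<dots> = Gam L h G c d" unfolding y_def by (rule Gam_eq[OF assms(1,2), symmetric])
  finally show ?thesis .
qed


lemma modL: "(int (u mod N) - v) mod int N = (int u - v) mod int N"
  by (simp add: of_nat_mod mod_diff_left_eq)
lemma modR: "(v - int (u mod N)) mod int N = (v - int u) mod int N"
  by (simp add: of_nat_mod mod_diff_right_eq)
lemma modS: "x = y - int N \<Longrightarrow> x mod int N = y mod int N"
  by simp

lemma Gam_comm:
  assumes per: "\<forall>\<xi>. G (\<xi> + L) = G \<xi>" and L: "L > 0" and hd: "h = L / real N" and N: "N \<ge> 5"
    and ij: "i < N" "j < N"
  shows "Dg N (\<lambda>i k. complex_of_real (Cmat N h i k)) (\<lambda>i j. Gam L h G i j) i j = 0"
proof -
  have N0: "N > 0" using N by simp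
  note gc = Gam_cong[OF per L hd N0]
  have g1: "Gam L h G ((i+2) mod N) j = Gam L h G i ((j+N-2) mod N)"
    by (rule gc) (unfold modL modR, rule sym, rule modS, use N in simp)
  have g2: "Gam L h G ((i+1) mod N) j = Gam L h G i ((j+N-1) mod N)"
    by (rule gc) (unfold modL modR, rule sym, rule modS, use N in simp)
  have g3: "Gam L h G (i mod N) j = Gam L h G i (j mod N)"
    using ij by simp
  have g4: "Gam L h G ((i+N-1) mod N) j = Gam L h G i ((j+1) mod N)"
    by (rule gc) (unfold modL modR, rule sym, rule modS, use N in simp)
  have g5: "Gam L h G ((i+N-2) mod N) j = Gam L h G i ((j+2) mod N)"
    by (rule gc) (unfold modL modR, rule sym, rule modS, use N in simp)
  show ?thesis unfolding Dg_def C_apply[OF N0] g1 g2 g3 g4 g5 by (simp add: algebra_simps)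
qed

lemma Gam_herm:
  assumes per: "\<forall>\<xi>. G (\<xi> + L) = G \<xi>" and L: "L > 0" and sym: "\<forall>\<xi>. G (- \<xi>) = cnj (G \<xi>)"
  shows "Gam L h G i j = cnj (Gam L h G j i)"
proof -
  have "Gam L h G i j = G (- (real_of_int (int j - int i) * h))"
    unfolding Gam_eq[OF per L] by (simp add: algebra_simps)
  also have "\<dots> = cnj (Gam L h G j i)" unfolding Gam_eq[OF per L] using sym by blast
  finally show ?thesis .
qed


lemma phi_step:
  assumes VH: "\<forall>i<N. \<forall>j<N. V i j = cnj (V j i)"
    and Q: "\<forall>i<N. \<forall>j<N. Im (Q i j) = 0 \<and> Q i j = - Q j i"
    and F: "\<forall>i<N. \<forall>j<N. F i j = 2 * (V i i - V j j) - Q i j"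
  shows "\<forall>i<N. \<forall>j<N. Im (F i j) = 0 \<and> F i j = - F j i"
proof (intro allI impI conjI)
  fix i j assume ij: "i < N" "j < N"
  have vi: "Im (V i i) = 0"
  proof -
    have "V i i = cnj (V i i)" using VH ij by blast
    hence "Im (V i i) = Im (cnj (V i i))" by simp
    thus ?thesis by simp
  qed
  have vj: "Im (V j j) = 0"
  proof -
    have "V j j = cnj (V j j)" using VH ij by blast
    hence "Im (V j j) = Im (cnj (V j j))" by simp
    thus ?thesis by simp
  qed
  have fij: "F i j = 2 * (V i i - V j j) - Q i j" using F ij by blast
  have fji: "F j i = 2 * (V j j - V i i) - Q j i" using F ij by blast
  have qi: "Im (Q i j) = 0" using Q ij by blast
  have qa: "Q i j = - Q j i" using Q ij by blast
  show "Im (F i j) = 0" unfolding fij using vi vj qi by simp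
  show "F i j = - F j i" unfolding fij fji qa by (simp add: algebra_simps)
qed

theorem proposition3p1:
  fixes L h \<tau> p q :: real and N :: nat
    and G :: "real \<Rightarrow> complex"
    and Phim :: "nat \<Rightarrow> nat \<Rightarrow> real"
    and U Uh Phi :: "nat \<Rightarrow> nat \<Rightarrow> nat \<Rightarrow> complex"
  assumes L_pos: "L > 0" and N_ge: "N \<ge> 5" and h_def: "h = L / real N"
    and tau_pos: "\<tau> > 0"
    and G_per: "\<forall>\<xi>. G (\<xi> + L) = G \<xi>"
    and G_sym: "\<forall>\<xi>. G (- \<xi>) = cnj (G \<xi>)"
    and U0_herm: "\<forall>i<N. \<forall>j<N. U 0 i j = cnj (U 0 j i)"
    and Phim_anti: "\<forall>i<N. \<forall>j<N. Phim i j = - Phim j i"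
    and Phi_0: "\<forall>i<N. \<forall>j<N.
        Phi 0 i j = 2 * (U 0 i i - U 0 j j) - complex_of_real (Phim i j)"
    and Phi_Suc: "\<forall>n. \<forall>i<N. \<forall>j<N.
        Phi (Suc n) i j = 2 * (U (Suc n) i i - U (Suc n) j j) - Phi n i j"
    and Uh_eq: "\<forall>n. \<forall>i<N. \<forall>j<N.
        Uh n i j - (\<i> * complex_of_real (p * \<tau> / 2)) * DH N h (Uh n) i j
          - (\<i> * complex_of_real (q * \<tau> / 2)) * Phi n i j * Uh n i j
        = U n i j + (\<i> * complex_of_real (q * \<tau> / 2)) * Gam L h G i j * Phi n i j"
    and U_Suc: "\<forall>n. \<forall>i<N. \<forall>j<N. U (Suc n) i j = 2 * Uh n i j - U n i j"
  shows "\<forall>n. I0 N L h G (U (Suc n)) = I0 N L h G (U n)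
            \<and> I1 N h (U (Suc n)) = I1 N h (U n)"
proof -
  define c where "c = (\<lambda>i k. complex_of_real (Cmat N h i k))"
  define \<Gamma> where "\<Gamma> = (\<lambda>i j. Gam L h G i j)"
  have sym: "\<forall>i<N. \<forall>k<N. c i k = c k i" unfolding c_def using Cmat_sym[OF _ _ N_ge] by metis
  have re: "\<And>i k. cnj (c i k) = c i k" by (simp add: c_def)
  have DHc: "\<And>X i j. DH N h X i j = Dg N c X i j" by (simp add: DH_def Dg_def c_def)
  have GH: "\<forall>i<N. \<forall>j<N. \<Gamma> i j = cnj (\<Gamma> j i)"
    unfolding \<Gamma>_def using Gam_herm[OF G_per L_pos G_sym] by blast
  have GD: "\<forall>i<N. \<forall>j<N. Dg N c \<Gamma> i j = 0"
    unfolding \<Gamma>_def c_def using Gam_comm[OF G_per L_pos h_def N_ge] by blast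
  have eqn: "\<forall>i<N. \<forall>j<N. Uh n i j - \<i> * complex_of_real (p * \<tau> / 2) * Dg N c (Uh n) i j
      - \<i> * complex_of_real (q * \<tau> / 2) * Phi n i j * Uh n i j
      = U n i j + \<i> * complex_of_real (q * \<tau> / 2) * \<Gamma> i j * Phi n i j" for n
    using Uh_eq unfolding DHc \<Gamma>_def by blast
  have inv: "(\<forall>i<N. \<forall>j<N. U n i j = cnj (U n j i)) \<and>
             (\<forall>i<N. \<forall>j<N. Im (Phi n i j) = 0 \<and> Phi n i j = - Phi n j i)" for n
  proof (induction n)
    case 0
    have "\<forall>i<N. \<forall>j<N. Im (complex_of_real (Phim i j)) = 0 \<and> complex_of_real (Phim i j) = - complex_of_real (Phim j i)"
    proof (intro allI impI conjI)
      fix i j assume "i<N" "j<N"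
      hence "Phim i j = - Phim j i" using Phim_anti by blast
      thus "complex_of_real (Phim i j) = - complex_of_real (Phim j i)" by simp
    qed simp
    with U0_herm Phi_0 show ?case using phi_step[of N "U 0" "\<lambda>i j. complex_of_real (Phim i j)" "Phi 0"] by blast
  next
    case (Suc n)
    have WH: "\<forall>i<N. \<forall>j<N. Uh n i j = cnj (Uh n j i)"
      by (rule step(1)[OF sym re _ _ GH GD eqn[of n]]) (use Suc in blast)+
    have UH: "\<forall>i<N. \<forall>j<N. U (Suc n) i j = cnj (U (Suc n) j i)"
    proof (intro allI impI)
      fix i j assume ij: "i<N" "j<N"
      have a: "U (Suc n) i j = 2 * Uh n i j - U n i j" using U_Suc ij by blast
      have b: "U (Suc n) j i = 2 * Uh n j i - U n j i" using U_Suc ij by blast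
      have w: "Uh n i j = cnj (Uh n j i)" using WH ij by blast
      have u: "U n i j = cnj (U n j i)" using Suc ij by blast
      show "U (Suc n) i j = cnj (U (Suc n) j i)" unfolding a b w u by simp
    qed
    have "\<forall>i<N. \<forall>j<N. Im (Phi (Suc n) i j) = 0 \<and> Phi (Suc n) i j = - Phi (Suc n) j i"
      by (rule phi_step[OF UH, where Q="Phi n"]) (use Suc Phi_Suc in blast)+
    with UH show ?case by blast
  qed
  show ?thesis
  proof (intro allI conjI)
    fix n
    have U1: "\<forall>i<N. \<forall>j<N. U n i j = cnj (U n j i)" using inv by blast
    have P1: "\<forall>i<N. \<forall>j<N. Im (Phi n i j) = 0 \<and> Phi n i j = - Phi n j i" using inv by blast
    note st = step[OF sym re U1 P1 GH GD eqn[of n]]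
    have "I0 N L h G (U (Suc n)) = h\<^sup>2 * (\<Sum>i<N. \<Sum>j<N. (cmod (\<Gamma> i j + (2 * Uh n i j - U n i j)))\<^sup>2)"
      unfolding I0_def \<Gamma>_def using U_Suc by simp
    also have "\<dots> = I0 N L h G (U n)" using st(2) unfolding I0_def \<Gamma>_def by simp
    finally show "I0 N L h G (U (Suc n)) = I0 N L h G (U n)" .
    have "I1 N h (U (Suc n)) = complex_of_real h * (\<Sum>i<N. 2 * Uh n i i - U n i i)"
      unfolding I1_def using U_Suc by simp
    also have "\<dots> = I1 N h (U n)" using st(3) unfolding I1_def by simp
    finally show "I1 N h (U (Suc n)) = I1 N h (U n)" .
  qed
qed

end
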